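(* Let \(m\) be a positive integer that is not a perfect square. Let \(\alpha_1,\alpha_2\in\mathbb N[\sqrt m]\setminus\{0\}\) be such that \((\alpha_1,\alpha_2)\) spans \(1\) in \(\mathbb Z[\sqrt m]\), and suppose that at least one of \(\alpha_1,\alpha_2\) has rational part \(0\) or irrational part \(0\). Then \[Frob(\alpha_1,\alpha_2)=(\alpha_1-1)(\alpha_2-1)(1+\sqrt m)+\mathbb N[\sqrt m].\]
   Context: \(\mathbb N\) denotes the set of non-negative integers. \(\mathbb Z[\sqrt m]=\{u+v\sqrt m\mid u,v\in\mathbb Z\}\) and \(\mathbb N[\sqrt m]=\{u+v\sqrt m\mid u,v\in\mathbb N\}\); every element of \(\mathbb Z[\sqrt m]\) is uniquely \(u+v\sqrt m\) with \(u,v\in\mathbb Z\), and \(u\), \(v\) are its rational and irrational parts. A pair \((\alpha_1,\alpha_2)\) spans \(1\) in \(\mathbb Z[\sqrt m]\) if \(\lambda_1\alpha_1+\lambda_2\alpha_2=1\) for some \(\lambda_1,\lambda_2\in\mathbb Z[\sqrt m]\). \(SG(\alpha_1,\alpha_2)=\{\lambda_1\alpha_1+\lambda_2\alpha_2\mid \lambda_1,\lambda_2\in\mathbb N[\sqrt m]\}\) and \(Frob(\alpha_1,\alpha_2)=\{w\in\mathbb Z[\sqrt m]\mid w+\mathbb N[\sqrt m]\subseteq SG(\alpha_1,\alpha_2)\}\). *)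

theory Defs
  imports Complex_Main
begin

definition Zsqrt :: "nat \<Rightarrow> real set" where
  "Zsqrt m = {of_int u + of_int v * sqrt (real m) | u v. True}"

definition Nsqrt :: "nat \<Rightarrow> real set" where
  "Nsqrt m = {of_nat u + of_nat v * sqrt (real m) | u v. True}"

text \<open>Rational and irrational parts (well defined when m is not a perfect square).\<close>

definition rat_part :: "nat \<Rightarrow> real \<Rightarrow> int" where
  "rat_part m x = fst (THE p. x = of_int (fst p) + of_int (snd p) * sqrt (real m))"

definition irr_part :: "nat \<Rightarrow> real \<Rightarrow> int" where
  "irr_part m x = snd (THE p. x = of_int (fst p) + of_int (snd p) * sqrt (real m))"

definition spans_one :: "nat \<Rightarrow> real \<Rightarrow> real \<Rightarrow> bool" where
  "spans_one m a1 a2 \<longleftrightarrow> (\<exists>l1\<in>Zsqrt m. \<exists>l2\<in>Zsqrt m. l1 * a1 + l2 * a2 = 1)"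

definition SG :: "nat \<Rightarrow> real \<Rightarrow> real \<Rightarrow> real set" where
  "SG m a1 a2 = {l1 * a1 + l2 * a2 | l1 l2. l1 \<in> Nsqrt m \<and> l2 \<in> Nsqrt m}"

definition Frob :: "nat \<Rightarrow> real \<Rightarrow> real \<Rightarrow> real set" where
  "Frob m a1 a2 = {w \<in> Zsqrt m. (\<lambda>x. w + x) ` Nsqrt m \<subseteq> SG m a1 a2}"

end

theory Submission imports Defs "HOL-Computational_Algebra.Nth_Powers" begin

lemma nonsq_inj:
  fixes u v u' v' :: int
  assumes ns: "\<not> (\<exists>k::nat. m = k ^ 2)"
    and eq: "of_int u + of_int v * sqrt (real m) = of_int u' + of_int v' * sqrt (real m)"
  shows "u = u' \<and> v = v'"
proof (cases "v = v'")
  case True then show ?thesis using eq by simp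
next
  case False
  have "of_int (v - v') * sqrt (real m) = of_int (u' - u)" using eq by (simp add: algebra_simps)
  hence "(of_int (v - v') * sqrt (real m))^2 = (of_int (u' - u))^2" by simp
  hence "real_of_int ((v - v')^2) * real m = real_of_int ((u'-u)^2)"
    by (simp add: power_mult_distrib)
  hence "int m * (v - v')^2 = (u'-u)^2"
    by (metis (mono_tags, opaque_lifting) mult.commute of_int_eq_iff of_int_mult of_int_of_nat_eq)
  hence "int m * int (nat \<bar>v - v'\<bar>)^2 = int (nat \<bar>u'-u\<bar>)^2" by simp
  hence h: "m * (nat \<bar>v - v'\<bar>)^2 = (nat \<bar>u'-u\<bar>)^2"
    by (metis of_nat_eq_iff of_nat_mult of_nat_power)
  have "is_nth_power 2 (m * (nat \<bar>v - v'\<bar>)^2)" unfolding h by simp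
  moreover have "nat \<bar>v - v'\<bar> \<noteq> 0" using False by simp
  ultimately have "is_nth_power 2 m"
    using is_nth_power_mult_cancel_right[of 2 "(nat \<bar>v - v'\<bar>)^2" m] by simp
  then show ?thesis using ns by (auto elim!: is_nth_powerE)
qed


definition E :: "nat \<Rightarrow> int \<Rightarrow> int \<Rightarrow> real" where
  "E m u v = of_int u + of_int v * sqrt (real m)"

lemma E_add: "E m u v + E m u' v' = E m (u+u') (v+v')"
  by (simp add: E_def algebra_simps)
lemma E_diff: "E m u v - E m u' v' = E m (u-u') (v-v')"
  by (simp add: E_def algebra_simps)
lemma E_mult: "E m u v * E m u' v' = E m (u*u' + int m*v*v') (u*v' + v*u')"
proof -
  have s: "sqrt (real m) * sqrt (real m) = real m" by simp
  have "E m u v * E m u' v' = of_int u * of_int u' + of_int v * of_int v' * (sqrt (real m) * sqrt (real m))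
      + (of_int u * of_int v' + of_int v * of_int u') * sqrt (real m)"
    by (simp add: E_def algebra_simps)
  also have "\<dots> = E m (u*u' + int m*v*v') (u*v' + v*u')" unfolding s by (simp add: E_def)
  finally show ?thesis .
qed
lemma E_inj: "\<not> (\<exists>k::nat. m = k ^ 2) \<Longrightarrow> E m u v = E m u' v' \<Longrightarrow> u = u' \<and> v = v'"
  using nonsq_inj unfolding E_def by blast

lemma Z_iff: "x \<in> Zsqrt m \<longleftrightarrow> (\<exists>u v. x = E m u v)"
  by (auto simp: Zsqrt_def E_def)
lemma N_iff: "x \<in> Nsqrt m \<longleftrightarrow> (\<exists>u v. 0 \<le> u \<and> 0 \<le> v \<and> x = E m u v)"
proof
  assume "x \<in> Nsqrt m"
  then obtain u v :: nat where "x = of_nat u + of_nat v * sqrt (real m)" by (auto simp: Nsqrt_def)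
  then show "\<exists>u v. 0 \<le> u \<and> 0 \<le> v \<and> x = E m u v"
    by (intro exI[of _ "int u"] exI[of _ "int v"]) (simp add: E_def)
next
  assume "\<exists>u v. 0 \<le> u \<and> 0 \<le> v \<and> x = E m u v"
  then obtain u v where "0 \<le> u" "0 \<le> v" "x = E m u v" by blast
  then have "x = of_nat (nat u) + of_nat (nat v) * sqrt (real m)" by (simp add: E_def)
  then show "x \<in> Nsqrt m" by (auto simp: Nsqrt_def)
qed
lemma E_N: "0 \<le> u \<Longrightarrow> 0 \<le> v \<Longrightarrow> E m u v \<in> Nsqrt m"
  using N_iff by blast
lemma N_E: "\<not> (\<exists>k::nat. m = k ^ 2) \<Longrightarrow> E m u v \<in> Nsqrt m \<Longrightarrow> 0 \<le> u \<and> 0 \<le> v"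
  using N_iff E_inj by metis
lemma E_Z: "E m u v \<in> Zsqrt m" using Z_iff by blast
lemma N_Z: "x \<in> Nsqrt m \<Longrightarrow> x \<in> Zsqrt m" using N_iff Z_iff by blast
lemma Z_add: "x \<in> Zsqrt m \<Longrightarrow> y \<in> Zsqrt m \<Longrightarrow> x + y \<in> Zsqrt m"
  using Z_iff E_add by metis
lemma Z_diff: "x \<in> Zsqrt m \<Longrightarrow> y \<in> Zsqrt m \<Longrightarrow> x - y \<in> Zsqrt m"
  using Z_iff E_diff by metis
lemma Z_mult: "x \<in> Zsqrt m \<Longrightarrow> y \<in> Zsqrt m \<Longrightarrow> x * y \<in> Zsqrt m"
  using Z_iff E_mult by metis
lemma N_add: "x \<in> Nsqrt m \<Longrightarrow> y \<in> Nsqrt m \<Longrightarrow> x + y \<in> Nsqrt m"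
  unfolding N_iff by (metis E_add add_nonneg_nonneg)
lemma N_mult: "x \<in> Nsqrt m \<Longrightarrow> y \<in> Nsqrt m \<Longrightarrow> x * y \<in> Nsqrt m"
  unfolding N_iff by (metis E_mult add_nonneg_nonneg mult_nonneg_nonneg of_nat_0_le_iff)

lemma kpos: fixes d k :: int assumes "d > 0" "0 \<le> d*k + (d - 1)" shows "0 \<le> k"
proof (rule ccontr)
  assume "\<not> 0 \<le> k" then have "k \<le> -1" by simp
  then have "d*k \<le> d*(-1)" using assms(1) by (intro mult_left_mono) auto
  then show False using assms(2) by simp
qed


lemma main:
  fixes d1 d2 :: int and a1 b :: real
  assumes ns: "\<not> (\<exists>k::nat. m = k ^ 2)"
    and d1: "d1 > 0" and d2: "d2 > 0"
    and a1: "a1 \<in> Nsqrt m" and b: "b \<in> Nsqrt m" and sp: "spans_one m a1 b"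
    and H1: "\<And>k1 k2. 0 \<le> k1 \<Longrightarrow> 0 \<le> k2 \<Longrightarrow> \<exists>kp\<in>Nsqrt m. a1 * kp = E m (d1*k1) (d2*k2)"
    and H2a: "\<And>x. x \<in> Zsqrt m \<Longrightarrow> \<exists>k1 k2. a1 * x = E m (d1*k1) (d2*k2)"
    and H2b: "\<And>k1 k2. \<exists>x\<in>Zsqrt m. a1 * x = E m (d1*k1) (d2*k2)"
    and H3: "(a1 - 1) * (1 + sqrt (real m)) = E m (d1 - 1) (d2 - 1)"
  shows "Frob m a1 b = (\<lambda>x. (a1 - 1) * (b - 1) * (1 + sqrt (real m)) + x) ` Nsqrt m"
proof -
  define e where "e = E m (d1 - 1) (d2 - 1)"
  have ceq: "(a1 - 1) * (b - 1) * (1 + sqrt (real m)) = e * b - e"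
  proof -
    have "(a1 - 1) * (b - 1) * (1 + sqrt (real m)) = ((a1 - 1) * (1 + sqrt (real m))) * (b - 1)"
      by (simp only: ac_simps)
    also have "\<dots> = e * (b - 1)" using H3 unfolding e_def by simp
    finally show ?thesis by (simp add: right_diff_distrib)
  qed
  obtain \<mu> \<nu> where mu: "\<mu> \<in> Zsqrt m" and nu: "\<nu> \<in> Zsqrt m" and one: "\<mu> * a1 + \<nu> * b = 1"
    using sp unfolding spans_one_def by blast
  have aZ: "a1 \<in> Zsqrt m" and bZ: "b \<in> Zsqrt m" using a1 b N_Z by auto
  have eZ: "e \<in> Zsqrt m" and eN: "e \<in> Nsqrt m" using d1 d2 unfolding e_def by (auto intro: E_Z E_N)
  have cZ: "e * b - e \<in> Zsqrt m" using eZ bZ by (intro Z_diff Z_mult)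
  show ?thesis unfolding ceq
  proof (rule set_eqI, rule iffI)
    fix w assume "w \<in> Frob m a1 b"
    then have wZ: "w \<in> Zsqrt m" and wF: "\<And>y. y \<in> Nsqrt m \<Longrightarrow> w + y \<in> SG m a1 b"
      unfolding Frob_def by auto
    obtain w1 w2 where w: "w = E m w1 w2" using wZ Z_iff by blast
    obtain r1 r2 where r: "e * b = E m r1 r2" using Z_mult[OF eZ bZ] Z_iff by blast
    define y where "y = E m ((r1 - w1) mod d1) ((r2 - w2) mod d2)"
    have yN: "y \<in> Nsqrt m" unfolding y_def using d1 d2 by (intro E_N) auto
    define z where "z = w + y"
    have "z \<in> SG m a1 b" unfolding z_def using wF[OF yN] .
    then obtain kp lm where ka: "kp \<in> Nsqrt m" and la: "lm \<in> Nsqrt m" and zk: "z = kp * a1 + lm * b"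
      unfolding SG_def by blast
    have zr: "z - e * b = E m (d1 * (- ((r1 - w1) div d1))) (d2 * (- ((r2 - w2) div d2)))"
      unfolding z_def y_def w r E_add E_diff
      by (simp add: algebra_simps minus_div_mult_eq_mod[symmetric])
    obtain t1 where t1: "t1 \<in> Zsqrt m" "a1 * t1 = z - e * b" using H2b zr by metis
    have lb: "(lm - e) * b = a1 * (t1 - kp)" using t1 zk by (simp add: algebra_simps)
    have "lm - e = (lm - e) * (\<mu> * a1 + \<nu> * b)" using one by simp
    also have "\<dots> = a1 * ((lm - e) * \<mu>) + \<nu> * ((lm - e) * b)" by (simp add: algebra_simps)
    also have "\<dots> = a1 * ((lm - e) * \<mu> + (t1 - kp) * \<nu>)" unfolding lb by (simp add: algebra_simps)
    finally have "lm - e = a1 * ((lm - e) * \<mu> + (t1 - kp) * \<nu>)" .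
    moreover have "(lm - e) * \<mu> + (t1 - kp) * \<nu> \<in> Zsqrt m"
      using la eZ mu nu t1 ka by (meson N_Z Z_add Z_diff Z_mult)
    ultimately obtain j1 j2 where j: "lm - e = E m (d1*j1) (d2*j2)" using H2a by metis
    obtain l1 l2 where l: "0 \<le> l1" "0 \<le> l2" "lm = E m l1 l2" using la N_iff by blast
    have "l1 = d1 - 1 + d1*j1 \<and> l2 = d2 - 1 + d2*j2"
    proof -
      have "E m (l1 - (d1 - 1)) (l2 - (d2 - 1)) = E m (d1*j1) (d2*j2)" using j l(3) unfolding e_def by (simp add: E_diff)
      then have "l1 - (d1 - 1) = d1*j1 \<and> l2 - (d2 - 1) = d2*j2" using E_inj[OF ns] by blast
      then show ?thesis by linarith
    qed
    then have "0 \<le> j1" "0 \<le> j2" using kpos d1 d2 l by (auto simp: algebra_simps)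
    then have leN: "lm - e \<in> Nsqrt m" unfolding j using d1 d2 by (intro E_N) auto
    have "z - e * b = (lm - e) * b + kp * a1" using zk by (simp add: algebra_simps)
    moreover have "(lm - e) * b + kp * a1 \<in> Nsqrt m" using leN b ka a1 by (intro N_add N_mult)
    ultimately have "z - e * b \<in> Nsqrt m" by simp
    then have nn: "0 \<le> d1 * (- ((r1 - w1) div d1))" "0 \<le> d2 * (- ((r2 - w2) div d2))"
      using N_E[OF ns, of "d1 * (- ((r1 - w1) div d1))" "d2 * (- ((r2 - w2) div d2))"] unfolding zr[symmetric] by blast+
    have "r1 - w1 < d1"
    proof -
      have "r1 - w1 = d1 * ((r1 - w1) div d1) + (r1 - w1) mod d1" by simp
      moreover have "(r1 - w1) mod d1 < d1" using d1 by simp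
      moreover have "d1 * ((r1 - w1) div d1) \<le> 0" using nn(1) by simp
      ultimately show ?thesis by linarith
    qed
    moreover have "r2 - w2 < d2"
    proof -
      have "r2 - w2 = d2 * ((r2 - w2) div d2) + (r2 - w2) mod d2" by simp
      moreover have "(r2 - w2) mod d2 < d2" using d2 by simp
      moreover have "d2 * ((r2 - w2) div d2) \<le> 0" using nn(2) by simp
      ultimately show ?thesis by linarith
    qed
    moreover have "w - (e * b - e) = E m w1 w2 - (E m r1 r2 - E m (d1 - 1) (d2 - 1))"
      using w r e_def by simp
    ultimately have "w - (e * b - e) \<in> Nsqrt m"
      unfolding E_diff by (auto intro: E_N)
    then show "w \<in> (\<lambda>x. e * b - e + x) ` Nsqrt m" by (intro image_eqI[of _ _ "w - (e * b - e)"]) auto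
  next
    fix w assume "w \<in> (\<lambda>x. e * b - e + x) ` Nsqrt m"
    then obtain n where nN: "n \<in> Nsqrt m" and w: "w = e * b - e + n" by blast
    have wZ: "w \<in> Zsqrt m" using w cZ nN N_Z Z_add by blast
    have "w + y \<in> SG m a1 b" if yN: "y \<in> Nsqrt m" for y
    proof -
      define z where "z = w + y"
      have zZ: "z \<in> Zsqrt m" unfolding z_def using wZ yN N_Z Z_add by blast
      obtain r1 r2 where r: "z * \<nu> = E m r1 r2" using Z_mult[OF zZ nu] Z_iff by blast
      define lm where "lm = E m (r1 mod d1) (r2 mod d2)"
      have laN: "lm \<in> Nsqrt m" unfolding lm_def using d1 d2 by (intro E_N) auto
      have "z * \<nu> - lm = E m (d1 * (r1 div d1)) (d2 * (r2 div d2))"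
        unfolding r lm_def E_diff by (simp add: minus_mod_eq_mult_div)
      then obtain t where t: "t \<in> Zsqrt m" "a1 * t = z * \<nu> - lm" using H2b by metis
      have "z - lm * b = a1 * (z * \<mu> + t * b)"
      proof -
        have "z = z * (\<mu> * a1 + \<nu> * b)" using one by simp
        then have "z = z * \<mu> * a1 + (z * \<nu>) * b" by (simp add: algebra_simps)
        moreover have "z * \<nu> = a1 * t + lm" using t(2) by simp
        ultimately have "z = z * \<mu> * a1 + (a1 * t + lm) * b" by simp
        then show ?thesis by (simp add: algebra_simps)
      qed
      moreover have "z * \<mu> + t * b \<in> Zsqrt m" using zZ mu t bZ by (meson Z_add Z_mult)
      ultimately obtain k1 k2 where k: "z - lm * b = E m (d1*k1) (d2*k2)" using H2a by metis
      have "e - lm = E m (d1 - 1 - r1 mod d1) (d2 - 1 - r2 mod d2)" unfolding e_def lm_def E_diff ..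
      moreover have "r1 mod d1 \<le> d1 - 1" "r2 mod d2 \<le> d2 - 1" using d1 d2 by auto
      ultimately have elN: "e - lm \<in> Nsqrt m" by (auto intro: E_N)
      have "z - lm * b + e = (e - lm) * b + n + y" unfolding z_def w by (simp add: algebra_simps)
      moreover have "(e - lm) * b + n + y \<in> Nsqrt m" using elN b nN yN by (intro N_add N_mult)
      ultimately have "z - lm * b + e \<in> Nsqrt m" by simp
      then have "E m (d1*k1 + (d1 - 1)) (d2*k2 + (d2 - 1)) \<in> Nsqrt m"
        unfolding k e_def E_add .
      then have "0 \<le> k1" "0 \<le> k2" using N_E[OF ns] kpos d1 d2 by blast+
      then obtain kp where "kp \<in> Nsqrt m" "a1 * kp = E m (d1*k1) (d2*k2)" using H1 by blast
      then have "z = kp * a1 + lm * b" "kp \<in> Nsqrt m" using k by (auto simp: algebra_simps)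
      then show ?thesis unfolding SG_def z_def using laN by blast
    qed
    then show "w \<in> Frob m a1 b" unfolding Frob_def using wZ by auto
  qed
qed


lemma parts:
  assumes ns: "\<not> (\<exists>k::nat. m = k ^ 2)"
  shows "rat_part m (E m u v) = u \<and> irr_part m (E m u v) = v"
proof -
  have "(THE p. E m u v = of_int (fst p) + of_int (snd p) * sqrt (real m)) = (u, v)"
  proof (rule the_equality)
    fix p :: "int \<times> int" assume "E m u v = of_int (fst p) + of_int (snd p) * sqrt (real m)"
    then have "E m u v = E m (fst p) (snd p)" by (simp add: E_def)
    then show "p = (u, v)" using E_inj[OF ns] by (metis prod.collapse)
  qed (simp add: E_def)
  then show ?thesis unfolding rat_part_def irr_part_def by simp
qed

lemma one_case:
  fixes a1 b :: real
  assumes m: "m > 0" and ns: "\<not> (\<exists>k::nat. m = k ^ 2)"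
    and a1: "a1 \<in> Nsqrt m - {0}" and b: "b \<in> Nsqrt m" and sp: "spans_one m a1 b"
    and pz: "rat_part m a1 = 0 \<or> irr_part m a1 = 0"
  shows "Frob m a1 b = (\<lambda>x. (a1 - 1) * (b - 1) * (1 + sqrt (real m)) + x) ` Nsqrt m"
proof -
  obtain u v where uv: "0 \<le> u" "0 \<le> v" "a1 = E m u v" using a1 N_iff by blast
  have one: "1 + sqrt (real m) = E m 1 1" by (simp add: E_def)
  have a1N: "a1 \<in> Nsqrt m" using a1 by simp
  from pz parts[OF ns] uv(3) have "u = 0 \<or> v = 0" by metis
  then show ?thesis
  proof
    assume u0: "u = 0"
    then have vpos: "v > 0" using uv a1 by (auto simp: E_def)
    have mpos: "v * int m > 0" using vpos m by simp
    show ?thesis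
    proof (rule main[OF ns mpos vpos a1N b sp])
      fix k1 k2 :: int assume "0 \<le> k1" "0 \<le> k2"
      then show "\<exists>kp\<in>Nsqrt m. a1 * kp = E m (v * int m * k1) (v * k2)"
        by (intro bexI[of _ "E m k2 k1"]) (auto simp: uv(3) u0 E_mult algebra_simps intro: E_N)
    next
      fix x assume "x \<in> Zsqrt m"
      then obtain p q where "x = E m p q" using Z_iff by blast
      then show "\<exists>k1 k2. a1 * x = E m (v * int m * k1) (v * k2)"
        by (intro exI[of _ q] exI[of _ p]) (simp add: uv(3) u0 E_mult algebra_simps)
    next
      fix k1 k2 :: int
      show "\<exists>x\<in>Zsqrt m. a1 * x = E m (v * int m * k1) (v * k2)"
        by (intro bexI[of _ "E m k2 k1"]) (auto simp: uv(3) u0 E_mult algebra_simps intro: E_Z)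
    next
      have "a1 - 1 = E m (-1) v" using uv(3) u0 by (simp add: E_def)
      then show "(a1 - 1) * (1 + sqrt (real m)) = E m (v * int m - 1) (v - 1)"
        unfolding one by (simp add: E_mult algebra_simps)
    qed
  next
    assume v0: "v = 0"
    then have upos: "u > 0" using uv a1 by (auto simp: E_def)
    show ?thesis
    proof (rule main[OF ns upos upos a1N b sp])
      fix k1 k2 :: int assume "0 \<le> k1" "0 \<le> k2"
      then show "\<exists>kp\<in>Nsqrt m. a1 * kp = E m (u * k1) (u * k2)"
        by (intro bexI[of _ "E m k1 k2"]) (auto simp: uv(3) v0 E_mult algebra_simps intro: E_N)
    next
      fix x assume "x \<in> Zsqrt m"
      then obtain p q where "x = E m p q" using Z_iff by blast
      then show "\<exists>k1 k2. a1 * x = E m (u * k1) (u * k2)"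
        by (intro exI[of _ p] exI[of _ q]) (simp add: uv(3) v0 E_mult algebra_simps)
    next
      fix k1 k2 :: int
      show "\<exists>x\<in>Zsqrt m. a1 * x = E m (u * k1) (u * k2)"
        by (intro bexI[of _ "E m k1 k2"]) (auto simp: uv(3) v0 E_mult algebra_simps intro: E_Z)
    next
      have "a1 - 1 = E m (u - 1) 0" using uv(3) v0 by (simp add: E_def)
      then show "(a1 - 1) * (1 + sqrt (real m)) = E m (u - 1) (u - 1)"
        unfolding one by (simp add: E_mult algebra_simps)
    qed
  qed
qed

lemma Frob_sym: "Frob m a1 a2 = Frob m a2 a1"
proof -
  have "SG m a1 a2 = SG m a2 a1" unfolding SG_def by (metis (no_types, lifting) add.commute)
  then show ?thesis unfolding Frob_def by simp
qed

lemma spans_sym: "spans_one m a1 a2 \<Longrightarrow> spans_one m a2 a1"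
  unfolding spans_one_def by (metis add.commute)

theorem corollary3:
  fixes m :: nat and a1 a2 :: real
  assumes "m > 0"
    and "\<not> (\<exists>k::nat. m = k ^ 2)"
    and "a1 \<in> Nsqrt m - {0}" and "a2 \<in> Nsqrt m - {0}"
    and "spans_one m a1 a2"
    and "rat_part m a1 = 0 \<or> irr_part m a1 = 0 \<or> rat_part m a2 = 0 \<or> irr_part m a2 = 0"
  shows "Frob m a1 a2 = (\<lambda>x. (a1 - 1) * (a2 - 1) * (1 + sqrt (real m)) + x) ` Nsqrt m"
proof -
  consider "rat_part m a1 = 0 \<or> irr_part m a1 = 0" | "rat_part m a2 = 0 \<or> irr_part m a2 = 0"
    using assms(6) by blast
  then show ?thesis
  proof cases
    case 1 then show ?thesis using one_case assms by blast
  next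
    case 2
    have "Frob m a2 a1 = (\<lambda>x. (a2 - 1) * (a1 - 1) * (1 + sqrt (real m)) + x) ` Nsqrt m"
      using one_case[OF assms(1,2,4)] assms(3) spans_sym[OF assms(5)] 2 by blast
    then show ?thesis by (simp add: Frob_sym mult.commute)
  qed
qed

end
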